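(* Consider the linear program $$z^*=\min\Big\{c^\top x+\sum_{v\in V_+}\theta_v:\ \theta_v\ge\sum_{\xi}p_\xi w_vy^\xi_v\ \forall v;\ y^\xi(S)\ge k_\xi(S)+x(E(S))-|S|\ \forall\emptyset\ne S\subseteq V_+,\xi\in[N];\ x\in\mathcal{X};\ y\in[\mathbf 0,b]^N\Big\}.$$ Suppose it is solved to optimality, and let $\alpha^*\ge0$ and $\beta^*\le0$ be optimal dual values associated with the constraints $y^\xi(S)\ge k_\xi(S)+x(E(S))-|S|$ and the upper bound constraints $y^\xi_v\le b_v$, respectively. Then $$z^*=\min\Big\{c^\top x+\mathbf 1^\top\theta:\ x\in\mathcal{X},\ \theta\in\operatorname{proj}_\theta(\Gamma(x,\alpha^*,\beta^* ))\Big\}.$$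
   Context: $G=(V,E)$ complete undirected graph, $V=\{0\}\cup V_+$ ($V_+$ customers), edge costs $c\in\mathbb{Q}^E_{\ge0}$; capacity $C>0$; scenarios $\xi\in[N]$ with demands $d^\xi\in\mathbb{Q}^{V_+}_{\ge0}$ ($d^\xi(v)\le C$) and probabilities $p_\xi\ge0$, $\sum_\xi p_\xi=1$. $f(S)=\sum_{i\in S}f(i)$; $k_\xi(S)=\lceil d^\xi(S)/C\rceil$; $\bar d=\sum_\xi p_\xi d^\xi$. $E(S)$: edges with both ends in $S$; $\delta(S)$: edges with exactly one end in $S$. $\mathcal{X}$ is one of $\mathcal{X}_{\mathrm{sub}}=\{x\in[0,2]^E: x(\delta(v))=2\ \forall v\in V_+,\ x(E(S))\le|S|-1\ \forall\emptyset\ne S\subseteq V_+\}$ or $\mathcal{X}_{\mathrm{cvrp}}=\mathcal{X}_{\mathrm{sub}}\cap\{x:x(\delta(0))=2k,\ x(E(S))\le|S|-\lceil\bar d(S)/C\rceil\}$. Fixed $w\in\mathbb{Q}^{V_+}_{\ge0}$, $b\in\mathbb{Z}^{V_+}_{\ge0}$; $y\in\mathbb{R}^{[N]\times V_+}$ has entries $y^\xi_v$; $[\mathbf 0,b]^N=\{y:0\le y^\xi_v\le b_v\}$. For multipliers $\alpha=(\alpha^\xi_S)\ge0$, $\beta=(\beta^\xi_v)\le0$: $\nu(\alpha,\beta)=\sum_\xi\sum_S\alpha^\xi_S(k_\xi(S)-|S|)+\sum_\xi\sum_v\beta^\xi_vb_v$, and for $x\in\mathcal{X}$, $\Gamma(x,\alpha,\beta)$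 is the set of $(\theta,y)\in\mathbb{R}^{V_+}_{\ge0}\times[\mathbf 0,b]^N$ with $\sum_\xi\sum_v(\beta^\xi_v+\sum_{S\ni v}\alpha^\xi_S)y^\xi_v\ge\sum_\xi\sum_S\alpha^\xi_Sx(E(S))+\nu(\alpha,\beta)$ and $\theta_v\ge\sum_\xi p_\xi w_vy^\xi_v$ for all $v$; $\operatorname{proj}_\theta$ is projection onto $\theta$. *)

theory Defs
  imports Complex_Main
begin

definition is_min :: "real set \<Rightarrow> real \<Rightarrow> bool" where
  "is_min A z = (z \<in> A \<and> (\<forall>a\<in>A. z \<le> a))"

section \<open>A generic linear program (all variables free, sign bounds are rows)\<close>

datatype sense = Ge | Le | Eq

fun sat :: "sense \<Rightarrow> real \<Rightarrow> real \<Rightarrow> bool" where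
  "sat Ge a r = (a \<ge> r)"
| "sat Le a r = (a \<le> r)"
| "sat Eq a r = (a = r)"

definition lp_feasible ::
  "'i set \<Rightarrow> ('i \<Rightarrow> ('j \<Rightarrow> real) \<Rightarrow> real) \<Rightarrow> ('i \<Rightarrow> sense) \<Rightarrow> ('i \<Rightarrow> real)
   \<Rightarrow> ('j \<Rightarrow> real) \<Rightarrow> bool" where
  "lp_feasible Rows lhs sns rhs u = (\<forall>i\<in>Rows. sat (sns i) (lhs i u) (rhs i))"

definition lp_obj :: "'j set \<Rightarrow> ('j \<Rightarrow> real) \<Rightarrow> ('j \<Rightarrow> real) \<Rightarrow> real" where
  "lp_obj Vars cost u = (\<Sum>j\<in>Vars. cost j * u j)"

definition lp_opt_value ::
  "'j set \<Rightarrow> 'i set \<Rightarrow> ('i \<Rightarrow> ('j \<Rightarrow> real) \<Rightarrow> real) \<Rightarrow> ('i \<Rightarrow> sense) \<Rightarrow> ('i \<Rightarrow> real)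
   \<Rightarrow> ('j \<Rightarrow> real) \<Rightarrow> real \<Rightarrow> bool" where
  "lp_opt_value Vars Rows lhs sns rhs cost z =
     is_min {lp_obj Vars cost u | u. lp_feasible Rows lhs sns rhs u} z"

definition lp_coef :: "('i \<Rightarrow> ('j \<Rightarrow> real) \<Rightarrow> real) \<Rightarrow> 'i \<Rightarrow> 'j \<Rightarrow> real" where
  "lp_coef lhs i j = lhs i (\<lambda>j'. if j' = j then 1 else 0)"

definition dual_feasible ::
  "'j set \<Rightarrow> 'i set \<Rightarrow> ('i \<Rightarrow> ('j \<Rightarrow> real) \<Rightarrow> real) \<Rightarrow> ('i \<Rightarrow> sense)
   \<Rightarrow> ('j \<Rightarrow> real) \<Rightarrow> ('i \<Rightarrow> real) \<Rightarrow> bool" where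
  "dual_feasible Vars Rows lhs sns cost lam =
     ((\<forall>i\<in>Rows. (sns i = Ge \<longrightarrow> lam i \<ge> 0) \<and> (sns i = Le \<longrightarrow> lam i \<le> 0)) \<and>
      (\<forall>j\<in>Vars. (\<Sum>i\<in>Rows. lam i * lp_coef lhs i j) = cost j))"

definition dual_obj :: "'i set \<Rightarrow> ('i \<Rightarrow> real) \<Rightarrow> ('i \<Rightarrow> real) \<Rightarrow> real" where
  "dual_obj Rows rhs lam = (\<Sum>i\<in>Rows. lam i * rhs i)"

definition dual_optimal ::
  "'j set \<Rightarrow> 'i set \<Rightarrow> ('i \<Rightarrow> ('j \<Rightarrow> real) \<Rightarrow> real) \<Rightarrow> ('i \<Rightarrow> sense) \<Rightarrow> ('i \<Rightarrow> real)
   \<Rightarrow> ('j \<Rightarrow> real) \<Rightarrow> ('i \<Rightarrow> real) \<Rightarrow> bool" where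
  "dual_optimal Vars Rows lhs sns rhs cost lam =
     (dual_feasible Vars Rows lhs sns cost lam \<and>
      (\<forall>mu. dual_feasible Vars Rows lhs sns cost mu \<longrightarrow> dual_obj Rows rhs mu \<le> dual_obj Rows rhs lam))"

text \<open>Vertices \<open>V = {0..n}\<close>, depot \<open>0\<close>, customers \<open>V\<^sub>+ = {1..n}\<close>;
  complete graph, edges are 2-element subsets of \<open>V\<close>; scenarios \<open>[N] = {1..N}\<close>.\<close>

definition Vp :: "nat \<Rightarrow> nat set" where "Vp n = {1..n}"
definition Edges :: "nat \<Rightarrow> nat set set" where
  "Edges n = {e. e \<subseteq> {0..n} \<and> card e = 2}"
definition inE :: "nat \<Rightarrow> nat set \<Rightarrow> nat set set" where
  "inE n S = {e \<in> Edges n. e \<subseteq> S}"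
definition delta :: "nat \<Rightarrow> nat set \<Rightarrow> nat set set" where
  "delta n S = {e \<in> Edges n. card (e \<inter> S) = 1}"
definition nsub :: "nat \<Rightarrow> nat set set" where
  "nsub n = {S. S \<subseteq> Vp n \<and> S \<noteq> {}}"
definition scen :: "nat \<Rightarrow> nat set" where "scen N = {1..N}"

text \<open>\<open>d \<xi> v\<close> = demand of customer \<open>v\<close> in scenario \<open>\<xi>\<close>.\<close>
definition kxi :: "real \<Rightarrow> (nat \<Rightarrow> nat \<Rightarrow> real) \<Rightarrow> nat \<Rightarrow> nat set \<Rightarrow> int" where
  "kxi C d \<xi> S = \<lceil>(\<Sum>v\<in>S. d \<xi> v) / C\<rceil>"

definition dbar :: "nat \<Rightarrow> (nat \<Rightarrow> real) \<Rightarrow> (nat \<Rightarrow> nat \<Rightarrow> real) \<Rightarrow> nat \<Rightarrow> real" where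
  "dbar N p d v = (\<Sum>\<xi>\<in>scen N. p \<xi> * d \<xi> v)"

definition X_sub :: "nat \<Rightarrow> (nat set \<Rightarrow> real) \<Rightarrow> bool" where
  "X_sub n x =
    ((\<forall>e\<in>Edges n. 0 \<le> x e \<and> x e \<le> 2) \<and>
     (\<forall>v\<in>Vp n. (\<Sum>e\<in>delta n {v}. x e) = 2) \<and>
     (\<forall>S\<in>nsub n. (\<Sum>e\<in>inE n S. x e) \<le> real (card S) - 1))"

definition X_cvrp :: "nat \<Rightarrow> nat \<Rightarrow> real \<Rightarrow> (nat \<Rightarrow> real) \<Rightarrow> (nat \<Rightarrow> nat \<Rightarrow> real) \<Rightarrow> nat
    \<Rightarrow> (nat set \<Rightarrow> real) \<Rightarrow> bool" where
  "X_cvrp n N C p d k x =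
    (X_sub n x \<and> (\<Sum>e\<in>delta n {0}. x e) = 2 * real k \<and>
     (\<forall>S\<in>nsub n. (\<Sum>e\<in>inE n S. x e) \<le>
                   real (card S) - of_int \<lceil>(\<Sum>v\<in>S. dbar N p d v) / C\<rceil>))"

definition Xset :: "bool \<Rightarrow> nat \<Rightarrow> nat \<Rightarrow> real \<Rightarrow> (nat \<Rightarrow> real) \<Rightarrow> (nat \<Rightarrow> nat \<Rightarrow> real) \<Rightarrow> nat
    \<Rightarrow> (nat set \<Rightarrow> real) \<Rightarrow> bool" where
  "Xset cvrp n N C p d k x = (if cvrp then X_cvrp n N C p d k x else X_sub n x)"

datatype var = VX "nat set" | VT nat | VY nat nat   (* x_e, theta_v, y^xi_v *)

datatype row =
    RTh nat              (* theta_v >= sum_xi p_xi w_v y^xi_v *)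
  | RCap nat "nat set"   (* y^xi(S) >= k_xi(S) + x(E(S)) - |S| *)
  | RYlo nat nat         (* y^xi_v >= 0 *)
  | RYup nat nat         (* y^xi_v <= b_v *)
  | RXlo "nat set"       (* x_e >= 0 *)
  | RXup "nat set"       (* x_e <= 2 *)
  | RDeg nat             (* x(delta(v)) = 2 *)
  | RSec "nat set"       (* x(E(S)) <= |S| - 1 *)
  | RDep                 (* x(delta(0)) = 2k   (cvrp only) *)
  | RRci "nat set"       (* x(E(S)) <= |S| - ceil(dbar(S)/C)  (cvrp only) *)

definition lp_vars :: "nat \<Rightarrow> nat \<Rightarrow> var set" where
  "lp_vars n N = VX ` Edges n \<union> VT ` Vp n \<union> {VY \<xi> v |\<xi> v. \<xi> \<in> scen N \<and> v \<in> Vp n}"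

definition lp_rows :: "bool \<Rightarrow> nat \<Rightarrow> nat \<Rightarrow> row set" where
  "lp_rows cvrp n N =
     RTh ` Vp n \<union> {RCap \<xi> S |\<xi> S. \<xi> \<in> scen N \<and> S \<in> nsub n}
     \<union> {RYlo \<xi> v |\<xi> v. \<xi> \<in> scen N \<and> v \<in> Vp n} \<union> {RYup \<xi> v |\<xi> v. \<xi> \<in> scen N \<and> v \<in> Vp n}
     \<union> RXlo ` Edges n \<union> RXup ` Edges n \<union> RDeg ` Vp n \<union> RSec ` nsub n
     \<union> (if cvrp then {RDep} \<union> RRci ` nsub n else {})"

fun lp_lhs :: "nat \<Rightarrow> nat \<Rightarrow> (nat \<Rightarrow> real) \<Rightarrow> (nat \<Rightarrow> real) \<Rightarrow> row \<Rightarrow> (var \<Rightarrow> real) \<Rightarrow> real" where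
  "lp_lhs n N p w (RTh v) u = u (VT v) - (\<Sum>\<xi>\<in>scen N. p \<xi> * w v * u (VY \<xi> v))"
| "lp_lhs n N p w (RCap \<xi> S) u = (\<Sum>v\<in>S. u (VY \<xi> v)) - (\<Sum>e\<in>inE n S. u (VX e))"
| "lp_lhs n N p w (RYlo \<xi> v) u = u (VY \<xi> v)"
| "lp_lhs n N p w (RYup \<xi> v) u = u (VY \<xi> v)"
| "lp_lhs n N p w (RXlo e) u = u (VX e)"
| "lp_lhs n N p w (RXup e) u = u (VX e)"
| "lp_lhs n N p w (RDeg v) u = (\<Sum>e\<in>delta n {v}. u (VX e))"
| "lp_lhs n N p w (RSec S) u = (\<Sum>e\<in>inE n S. u (VX e))"
| "lp_lhs n N p w RDep u = (\<Sum>e\<in>delta n {0}. u (VX e))"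
| "lp_lhs n N p w (RRci S) u = (\<Sum>e\<in>inE n S. u (VX e))"

fun lp_sense :: "row \<Rightarrow> sense" where
  "lp_sense (RTh v) = Ge"
| "lp_sense (RCap \<xi> S) = Ge"
| "lp_sense (RYlo \<xi> v) = Ge"
| "lp_sense (RYup \<xi> v) = Le"
| "lp_sense (RXlo e) = Ge"
| "lp_sense (RXup e) = Le"
| "lp_sense (RDeg v) = Eq"
| "lp_sense (RSec S) = Le"
| "lp_sense RDep = Eq"
| "lp_sense (RRci S) = Le"

fun lp_rhs :: "nat \<Rightarrow> real \<Rightarrow> (nat \<Rightarrow> real) \<Rightarrow> (nat \<Rightarrow> nat \<Rightarrow> real) \<Rightarrow> (nat \<Rightarrow> nat) \<Rightarrow> nat
    \<Rightarrow> row \<Rightarrow> real" where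
  "lp_rhs N C p d b k (RTh v) = 0"
| "lp_rhs N C p d b k (RCap \<xi> S) = of_int (kxi C d \<xi> S) - real (card S)"
| "lp_rhs N C p d b k (RYlo \<xi> v) = 0"
| "lp_rhs N C p d b k (RYup \<xi> v) = real (b v)"
| "lp_rhs N C p d b k (RXlo e) = 0"
| "lp_rhs N C p d b k (RXup e) = 2"
| "lp_rhs N C p d b k (RDeg v) = 2"
| "lp_rhs N C p d b k (RSec S) = real (card S) - 1"
| "lp_rhs N C p d b k RDep = 2 * real k"
| "lp_rhs N C p d b k (RRci S) = real (card S) - of_int \<lceil>(\<Sum>v\<in>S. dbar N p d v) / C\<rceil>"

fun lp_cost :: "(nat set \<Rightarrow> real) \<Rightarrow> var \<Rightarrow> real" where
  "lp_cost c (VX e) = c e"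
| "lp_cost c (VT v) = 1"
| "lp_cost c (VY \<xi> v) = 0"

definition nu :: "nat \<Rightarrow> nat \<Rightarrow> real \<Rightarrow> (nat \<Rightarrow> nat \<Rightarrow> real) \<Rightarrow> (nat \<Rightarrow> nat)
    \<Rightarrow> (nat \<Rightarrow> nat set \<Rightarrow> real) \<Rightarrow> (nat \<Rightarrow> nat \<Rightarrow> real) \<Rightarrow> real" where
  "nu n N C d b \<alpha> \<beta> =
     (\<Sum>\<xi>\<in>scen N. \<Sum>S\<in>nsub n. \<alpha> \<xi> S * (of_int (kxi C d \<xi> S) - real (card S)))
   + (\<Sum>\<xi>\<in>scen N. \<Sum>v\<in>Vp n. \<beta> \<xi> v * real (b v))"

definition Gamma :: "nat \<Rightarrow> nat \<Rightarrow> real \<Rightarrow> (nat \<Rightarrow> real) \<Rightarrow> (nat \<Rightarrow> nat \<Rightarrow> real) \<Rightarrow> (nat \<Rightarrow> real)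
    \<Rightarrow> (nat \<Rightarrow> nat) \<Rightarrow> (nat \<Rightarrow> nat set \<Rightarrow> real) \<Rightarrow> (nat \<Rightarrow> nat \<Rightarrow> real) \<Rightarrow> (nat set \<Rightarrow> real)
    \<Rightarrow> ((nat \<Rightarrow> real) \<times> (nat \<Rightarrow> nat \<Rightarrow> real)) set" where
  "Gamma n N C p d w b \<alpha> \<beta> x =
     {(\<theta>, y). (\<forall>v\<in>Vp n. 0 \<le> \<theta> v) \<and>
              (\<forall>\<xi>\<in>scen N. \<forall>v\<in>Vp n. 0 \<le> y \<xi> v \<and> y \<xi> v \<le> real (b v)) \<and>
              (\<Sum>\<xi>\<in>scen N. \<Sum>v\<in>Vp n. (\<beta> \<xi> v + (\<Sum>S\<in>{S\<in>nsub n. v \<in> S}. \<alpha> \<xi> S)) * y \<xi> v)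
                \<ge> (\<Sum>\<xi>\<in>scen N. \<Sum>S\<in>nsub n. \<alpha> \<xi> S * (\<Sum>e\<in>inE n S. x e)) + nu n N C d b \<alpha> \<beta> \<and>
              (\<forall>v\<in>Vp n. \<theta> v \<ge> (\<Sum>\<xi>\<in>scen N. p \<xi> * w v * y \<xi> v))}"

end

theory Submission imports Defs begin

inductive_set gcone :: "(('j \<Rightarrow> real) \<times> real) set \<Rightarrow> (('j \<Rightarrow> real) \<times> real) set"
  for G where
  base: "x \<in> G \<Longrightarrow> x \<in> gcone G"
| zero: "(\<lambda>j. 0, 0) \<in> gcone G"
| add: "(a, r) \<in> gcone G \<Longrightarrow> (b, s) \<in> gcone G \<Longrightarrow> (\<lambda>j. a j + b j, r + s) \<in> gcone G"
| smul: "(a, r) \<in> gcone G \<Longrightarrow> (c::real) \<ge> 0 \<Longrightarrow> (\<lambda>j. c * a j, c * r) \<in> gcone G"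

lemma gcone_comb:
  assumes "x \<in> gcone G" "y \<in> gcone G" "c \<ge> 0" "d \<ge> 0"
  shows "(\<lambda>j. c * fst x j + d * fst y j, c * snd x + d * snd y) \<in> gcone G"
proof -
  obtain a r b s where x: "x = (a, r)" and y: "y = (b, s)" by (cases x, cases y) auto
  have 1: "(\<lambda>j. c * a j, c * r) \<in> gcone G" using assms x by (auto intro: gcone.smul)
  have 2: "(\<lambda>j. d * b j, d * s) \<in> gcone G" using assms y by (auto intro: gcone.smul)
  show ?thesis using gcone.add[OF 1 2] x y by simp
qed

lemma gcone_mono:
  assumes "x \<in> gcone G'" "G' \<subseteq> gcone G"
  shows "x \<in> gcone G"
  using assms(1)
proof (induction rule: gcone.induct)
  case (base x) then show ?case using assms(2) by auto
next
  case zero then show ?case by (rule gcone.zero)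
next
  case (add a r b s) then show ?case by (simp add: gcone.add)
next
  case (smul a r c) then show ?case by (simp add: gcone.smul)
qed

lemma gcone_coord0:
  assumes "x \<in> gcone G" "\<forall>y\<in>G. fst y j0 = 0"
  shows "fst x j0 = 0"
  using assms(1) by (induction rule: gcone.induct) (use assms(2) in auto)

lemma gcone_repr:
  assumes "x \<in> gcone (g ` I)" "finite I"
  shows "\<exists>l. (\<forall>i\<in>I. l i \<ge> 0) \<and> fst x = (\<lambda>j. \<Sum>i\<in>I. l i * fst (g i) j)
             \<and> snd x = (\<Sum>i\<in>I. l i * snd (g i))"
  using assms(1)
proof (induction rule: gcone.induct)
  case (base x)
  then obtain i0 where i0: "i0 \<in> I" "x = g i0" by auto
  let ?l = "\<lambda>i. if i = i0 then 1 else (0::real)"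
  have d: "(\<Sum>i\<in>I. ?l i * f i) = f i0" for f :: "_ \<Rightarrow> real"
  proof -
    have "(\<Sum>i\<in>I. ?l i * f i) = (\<Sum>i\<in>I. if i = i0 then f i else 0)"
      by (rule sum.cong) auto
    also have "\<dots> = f i0" using i0 assms(2) by (simp add: sum.delta)
    finally show ?thesis .
  qed
  have "fst x = (\<lambda>j. \<Sum>i\<in>I. ?l i * fst (g i) j)"
    using i0 by (simp add: d)
  moreover have "snd x = (\<Sum>i\<in>I. ?l i * snd (g i))"
    using i0 by (simp add: d)
  ultimately show ?case by (intro exI[of _ ?l]) auto
next
  case zero
  then show ?case by (intro exI[of _ "\<lambda>i. 0"]) auto
next
  case (add a r b s)
  then obtain l1 l2 where l1: "\<forall>i\<in>I. l1 i \<ge> 0" "a = (\<lambda>j. \<Sum>i\<in>I. l1 i * fst (g i) j)"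
      "r = (\<Sum>i\<in>I. l1 i * snd (g i))"
    and l2: "\<forall>i\<in>I. l2 i \<ge> 0" "b = (\<lambda>j. \<Sum>i\<in>I. l2 i * fst (g i) j)"
      "s = (\<Sum>i\<in>I. l2 i * snd (g i))" by auto
  show ?case
    by (intro exI[of _ "\<lambda>i. l1 i + l2 i"])
       (use l1 l2 in \<open>auto simp: algebra_simps sum.distrib\<close>)
next
  case (smul a r c)
  then obtain l1 where l1: "\<forall>i\<in>I. l1 i \<ge> 0" "a = (\<lambda>j. \<Sum>i\<in>I. l1 i * fst (g i) j)"
      "r = (\<Sum>i\<in>I. l1 i * snd (g i))" by auto
  show ?case
    by (intro exI[of _ "\<lambda>i. c * l1 i"])
       (use l1 smul in \<open>auto simp: algebra_simps sum_distrib_left\<close>)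
qed

lemma farkas_set:
  assumes "finite Js" "finite R"
    and "\<not> (\<exists>u. \<forall>x\<in>R. snd x \<le> (\<Sum>j\<in>Js. fst x j * u j))"
  shows "\<exists>x\<in>gcone R. (\<forall>j\<in>Js. fst x j = 0) \<and> snd x > 0"
  using assms
proof (induction Js arbitrary: R rule: finite_induct)
  case empty
  then obtain x where "x \<in> R" "snd x > 0" by force
  then show ?case by (auto intro: gcone.base)
next
  case (insert j0 Js R)
  define Z where "Z = {x\<in>R. fst x j0 = 0}"
  define P where "P = {x\<in>R. fst x j0 > 0}"
  define Q where "Q = {x\<in>R. fst x j0 < 0}"
  define comb where "comb = (\<lambda>(x::('a \<Rightarrow> real) \<times> real, y::('a \<Rightarrow> real) \<times> real).
     (\<lambda>j. (- fst y j0) * fst x j + fst x j0 * fst y j, (- fst y j0) * snd x + fst x j0 * snd y))"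
  define R' where "R' = Z \<union> comb ` (P \<times> Q)"
  have finR': "finite R'" unfolding R'_def Z_def P_def Q_def using insert.prems(1) by auto
  have R'cone: "R' \<subseteq> gcone R"
  proof
    fix x assume "x \<in> R'"
    then consider "x \<in> Z" | p q where "p \<in> P" "q \<in> Q" "x = comb (p, q)" unfolding R'_def by auto
    then show "x \<in> gcone R"
    proof cases
      case 1 then show ?thesis unfolding Z_def by (auto intro: gcone.base)
    next
      case 2
      have "p \<in> gcone R" "q \<in> gcone R" using 2 unfolding P_def Q_def by (auto intro: gcone.base)
      from gcone_comb[OF this, of "- fst q j0" "fst p j0"] 2 show ?thesis
        unfolding comb_def P_def Q_def by auto
    qed
  qed
  have R'0: "\<forall>y\<in>R'. fst y j0 = 0" unfolding R'_def Z_def comb_def by auto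
  have "\<not> (\<exists>u. \<forall>x\<in>R'. snd x \<le> (\<Sum>j\<in>Js. fst x j * u j))"
  proof
    assume "\<exists>u. \<forall>x\<in>R'. snd x \<le> (\<Sum>j\<in>Js. fst x j * u j)"
    then obtain u where u: "\<forall>x\<in>R'. snd x \<le> (\<Sum>j\<in>Js. fst x j * u j)" by blast
    define S where "S = (\<lambda>x::('a \<Rightarrow> real) \<times> real. \<Sum>j\<in>Js. fst x j * u j)"
    define L where "L = (\<lambda>x. (snd x - S x) / fst x j0)"
    have finP: "finite P" "finite Q" unfolding P_def Q_def using insert.prems(1) by auto
    have LU: "L p \<le> L q" if "p \<in> P" "q \<in> Q" for p q
    proof -
      have "comb (p, q) \<in> R'" unfolding R'_def using that by auto
      then have "(- fst q j0) * snd p + fst p j0 * snd q \<le>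
                 (\<Sum>j\<in>Js. ((- fst q j0) * fst p j + fst p j0 * fst q j) * u j)"
        using u unfolding comb_def by auto
      also have "\<dots> = (\<Sum>j\<in>Js. (- fst q j0) * (fst p j * u j) + fst p j0 * (fst q j * u j))"
        by (rule sum.cong) (auto simp: algebra_simps)
      also have "\<dots> = (- fst q j0) * S p + fst p j0 * S q"
        unfolding S_def by (simp only: sum.distrib sum_distrib_left)
      finally have h: "(- fst q j0) * (snd p - S p) \<le> fst p j0 * (S q - snd q)"
        by (simp add: algebra_simps)
      have pp: "fst p j0 > 0" and qq: "fst q j0 < 0" using that unfolding P_def Q_def by auto
      have "L p = (- fst q j0) * (snd p - S p) / ((- fst q j0) * fst p j0)"
        unfolding L_def using pp qq by simp
      also have "\<dots> \<le> fst p j0 * (S q - snd q) / ((- fst q j0) * fst p j0)"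
        using h pp qq by (intro divide_right_mono) (auto simp: mult_nonpos_nonneg)
      also have "\<dots> = L q" unfolding L_def using pp qq by (simp add: field_simps)
      finally show ?thesis .
    qed
    define t where "t = (if P \<noteq> {} then Max (L ` P) else if Q \<noteq> {} then Min (L ` Q) else 0)"
    have tP: "L p \<le> t" if "p \<in> P" for p
      using that finP unfolding t_def by auto
    have tQ: "t \<le> L q" if "q \<in> Q" for q
    proof (cases "P = {}")
      case True then show ?thesis using that finP unfolding t_def by auto
    next
      case False
      then have "Max (L ` P) \<in> L ` P" using finP by auto
      then obtain p where "p \<in> P" "Max (L ` P) = L p" by auto
      then show ?thesis using LU[OF _ that] False unfolding t_def by auto
    qed
    define u' where "u' = u(j0 := t)"
    have sum': "(\<Sum>j\<in>insert j0 Js. fst x j * u' j) = fst x j0 * t + S x" for x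
    proof -
      have "(\<Sum>j\<in>Js. fst x j * u' j) = S x"
        unfolding S_def u'_def using insert.hyps(2) by (intro sum.cong) auto
      then show ?thesis using insert.hyps by (simp add: u'_def)
    qed
    have "\<forall>x\<in>R. snd x \<le> (\<Sum>j\<in>insert j0 Js. fst x j * u' j)"
    proof
      fix x assume xR: "x \<in> R"
      consider "fst x j0 = 0" | "fst x j0 > 0" | "fst x j0 < 0" by linarith
      then show "snd x \<le> (\<Sum>j\<in>insert j0 Js. fst x j * u' j)"
      proof cases
        case 1
        then have "x \<in> R'" unfolding R'_def Z_def using xR by auto
        then show ?thesis using u 1 sum' unfolding S_def by auto
      next
        case 2
        then have "x \<in> P" unfolding P_def using xR by auto
        then have "(snd x - S x) / fst x j0 \<le> t" using tP unfolding L_def by auto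
        then have "snd x - S x \<le> t * fst x j0" using 2 by (simp add: divide_le_eq)
        then show ?thesis using sum' by (simp add: algebra_simps)
      next
        case 3
        then have "x \<in> Q" unfolding Q_def using xR by auto
        then have "t \<le> (snd x - S x) / fst x j0" using tQ unfolding L_def by auto
        then have "snd x - S x \<le> t * fst x j0" using 3 by (simp add: le_divide_eq)
        then show ?thesis using sum' by (simp add: algebra_simps)
      qed
    qed
    then show False using insert.prems(2) by blast
  qed
  from insert.IH[OF finR' this] obtain x where x: "x \<in> gcone R'" "\<forall>j\<in>Js. fst x j = 0" "snd x > 0"
    by blast
  have "x \<in> gcone R" using gcone_mono[OF x(1) R'cone] .
  moreover have "fst x j0 = 0" using gcone_coord0[OF x(1) R'0] .
  ultimately show ?case using x by auto
qed

lemma farkas: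
  fixes a :: "'i \<Rightarrow> 'j \<Rightarrow> real" and r :: "'i \<Rightarrow> real"
  assumes "finite Js" "finite I"
    and "\<not> (\<exists>u. \<forall>i\<in>I. r i \<le> (\<Sum>j\<in>Js. a i j * u j))"
  shows "\<exists>l. (\<forall>i\<in>I. l i \<ge> 0) \<and> (\<forall>j\<in>Js. (\<Sum>i\<in>I. l i * a i j) = 0)
             \<and> (\<Sum>i\<in>I. l i * r i) > 0"
proof -
  let ?g = "\<lambda>i. (a i, r i)"
  have "\<not> (\<exists>u. \<forall>x\<in>?g ` I. snd x \<le> (\<Sum>j\<in>Js. fst x j * u j))" using assms(3) by auto
  from farkas_set[OF assms(1) _ this] assms(2)
  obtain x where x: "x \<in> gcone (?g ` I)" "\<forall>j\<in>Js. fst x j = 0" "snd x > 0" by auto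
  from gcone_repr[OF x(1) assms(2)] obtain l where
    "\<forall>i\<in>I. l i \<ge> 0" "fst x = (\<lambda>j. \<Sum>i\<in>I. l i * a i j)" "snd x = (\<Sum>i\<in>I. l i * r i)"
    by auto
  then show ?thesis using x by (intro exI[of _ l]) auto
qed


lemma sum_opt_split:
  assumes "finite Rows"
  shows "(\<Sum>k\<in>insert None (Some ` (Rows \<times> (UNIV::bool set))). f k) =
         f None + (\<Sum>i\<in>Rows. f (Some (i, True)) + f (Some (i, False)))"
proof -
  have "(\<Sum>k\<in>insert None (Some ` (Rows \<times> (UNIV::bool set))). f k) =
        f None + (\<Sum>k\<in>Some ` (Rows \<times> (UNIV::bool set)). f k)"
    using assms by (subst sum.insert) auto
  also have "(\<Sum>k\<in>Some ` (Rows \<times> (UNIV::bool set)). f k) = (\<Sum>x\<in>Rows \<times> (UNIV::bool set). f (Some x))"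
    by (subst sum.reindex) auto
  also have "\<dots> = (\<Sum>i\<in>Rows. \<Sum>b\<in>UNIV. f (Some (i, b)))"
    by (subst sum.cartesian_product) simp
  also have "\<dots> = (\<Sum>i\<in>Rows. f (Some (i, True)) + f (Some (i, False)))"
    by (simp add: UNIV_bool add.commute)
  finally show ?thesis .
qed

lemma sat_mult:
  assumes "sat s a r" "s = Ge \<longrightarrow> l \<ge> 0" "s = Le \<longrightarrow> l \<le> 0"
  shows "l * r \<le> l * a"
  using assms by (cases s) (auto intro: mult_left_mono mult_left_mono_neg)

lemma strong_duality_ge:
  assumes finV: "finite Vars" and finR: "finite Rows"
    and hlin: "\<And>i u. i \<in> Rows \<Longrightarrow> lhs i u = (\<Sum>j\<in>Vars. lp_coef lhs i j * u j)"
    and opt: "lp_opt_value Vars Rows lhs sns rhs cost z"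
    and dopt: "dual_optimal Vars Rows lhs sns rhs cost lam"
  shows "z \<le> dual_obj Rows rhs lam"
proof (rule field_le_epsilon)
  fix eps :: real assume eps: "eps > 0"
  obtain ustar where ustar: "lp_feasible Rows lhs sns rhs ustar"
    and zmin: "\<And>u. lp_feasible Rows lhs sns rhs u \<Longrightarrow> z \<le> lp_obj Vars cost u"
    using opt unfolding lp_opt_value_def is_min_def by blast
  define sg where "sg = (\<lambda>i b. if b then (if sns i = Le then -1 else 1)
                                  else (if sns i = Eq then -1 else (0::real)))"
  define I where "I = insert None (Some ` (Rows \<times> (UNIV::bool set)))"
  define a where "a = (\<lambda>k j. case k of None \<Rightarrow> - cost j
                                  | Some (i, b) \<Rightarrow> sg i b * lp_coef lhs i j)"
  define r where "r = (\<lambda>k. case k of None \<Rightarrow> - (z - eps)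
                                  | Some (i, b) \<Rightarrow> sg i b * rhs i)"
  have finI: "finite I" unfolding I_def using finR by auto
  have "\<not> (\<exists>u. \<forall>k\<in>I. r k \<le> (\<Sum>j\<in>Vars. a k j * u j))"
  proof
    assume "\<exists>u. \<forall>k\<in>I. r k \<le> (\<Sum>j\<in>Vars. a k j * u j)"
    then obtain u where u: "\<forall>k\<in>I. r k \<le> (\<Sum>j\<in>Vars. a k j * u j)" by blast
    have feas: "lp_feasible Rows lhs sns rhs u"
      unfolding lp_feasible_def
    proof
      fix i assume i: "i \<in> Rows"
      have "\<And>b. (\<Sum>j\<in>Vars. a (Some (i, b)) j * u j) = sg i b * lhs i u"
        unfolding a_def using hlin[OF i] by (simp add: sum_distrib_left mult.assoc)
      moreover have "Some (i, True) \<in> I" "Some (i, False) \<in> I" using i unfolding I_def by auto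
      ultimately have "sg i True * rhs i \<le> sg i True * lhs i u"
        "sg i False * rhs i \<le> sg i False * lhs i u"
        using u unfolding r_def by force+
      then show "sat (sns i) (lhs i u) (rhs i)"
        unfolding sg_def by (cases "sns i") auto
    qed
    have "None \<in> I" unfolding I_def by auto
    then have "- (z - eps) \<le> (\<Sum>j\<in>Vars. - cost j * u j)" using u unfolding r_def a_def by force
    then have "lp_obj Vars cost u \<le> z - eps" unfolding lp_obj_def by (simp add: sum_negf)
    with zmin[OF feas] eps show False by simp
  qed
  from farkas[OF finV finI this] obtain l where
    l0: "\<forall>k\<in>I. l k \<ge> 0" and l1: "\<forall>j\<in>Vars. (\<Sum>k\<in>I. l k * a k j) = 0"
    and l2: "(\<Sum>k\<in>I. l k * r k) > 0" by blast
  define mu where "mu = (\<lambda>i. l (Some (i, True)) * sg i True + l (Some (i, False)) * sg i False)"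
  have eq1: "(\<Sum>k\<in>I. l k * a k j) = - l None * cost j + (\<Sum>i\<in>Rows. mu i * lp_coef lhs i j)" for j
    unfolding I_def sum_opt_split[OF finR] by (simp add: a_def mu_def algebra_simps sum.distrib)
  have eq2: "(\<Sum>k\<in>I. l k * r k) = - l None * (z - eps) + (\<Sum>i\<in>Rows. mu i * rhs i)"
    unfolding I_def sum_opt_split[OF finR] by (simp add: r_def mu_def algebra_simps sum.distrib)
  have musign: "\<forall>i\<in>Rows. (sns i = Ge \<longrightarrow> mu i \<ge> 0) \<and> (sns i = Le \<longrightarrow> mu i \<le> 0)"
  proof
    fix i assume i: "i \<in> Rows"
    have "l (Some (i, True)) \<ge> 0" using l0 i unfolding I_def by auto
    then show "(sns i = Ge \<longrightarrow> mu i \<ge> 0) \<and> (sns i = Le \<longrightarrow> mu i \<le> 0)"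
      unfolding mu_def sg_def by auto
  qed
  have lN: "l None \<ge> 0" using l0 unfolding I_def by auto
  have "l None \<noteq> 0"
  proof
    assume ln0: "l None = 0"
    have "(\<Sum>i\<in>Rows. mu i * rhs i) \<le> (\<Sum>i\<in>Rows. mu i * lhs i ustar)"
    proof (rule sum_mono)
      fix i assume i: "i \<in> Rows"
      show "mu i * rhs i \<le> mu i * lhs i ustar"
        using sat_mult[of "sns i" "lhs i ustar" "rhs i" "mu i"] ustar musign i
        unfolding lp_feasible_def by auto
    qed
    also have "\<dots> = (\<Sum>i\<in>Rows. \<Sum>j\<in>Vars. mu i * lp_coef lhs i j * ustar j)"
      using hlin by (simp add: sum_distrib_left mult.assoc)
    also have "\<dots> = (\<Sum>j\<in>Vars. (\<Sum>i\<in>Rows. mu i * lp_coef lhs i j) * ustar j)"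
      by (subst sum.swap) (simp add: sum_distrib_right)
    also have "\<dots> = 0" using l1 eq1 ln0 by simp
    finally show False using l2 eq2 ln0 by simp
  qed
  with lN have lpos: "l None > 0" by simp
  define nu where "nu = (\<lambda>i. mu i / l None)"
  have dfeas: "dual_feasible Vars Rows lhs sns cost nu"
    unfolding dual_feasible_def
  proof (rule conjI)
    show "\<forall>i\<in>Rows. (sns i = Ge \<longrightarrow> nu i \<ge> 0) \<and> (sns i = Le \<longrightarrow> nu i \<le> 0)"
      using musign lpos unfolding nu_def by (auto simp: divide_nonpos_pos)
  next
    show "\<forall>j\<in>Vars. (\<Sum>i\<in>Rows. nu i * lp_coef lhs i j) = cost j"
    proof
    fix j assume j: "j \<in> Vars"
    have "(\<Sum>i\<in>Rows. mu i * lp_coef lhs i j) = l None * cost j" using l1 eq1 j by simp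
    then show "(\<Sum>i\<in>Rows. nu i * lp_coef lhs i j) = cost j"
      unfolding nu_def using lpos by (simp add: sum_divide_distrib[symmetric])
    qed
  qed
  have "(\<Sum>i\<in>Rows. mu i * rhs i) > l None * (z - eps)" using l2 eq2 by simp
  then have "dual_obj Rows rhs nu > z - eps"
    unfolding dual_obj_def nu_def using lpos
    by (simp add: sum_divide_distrib[symmetric] pos_less_divide_eq mult.commute)
  moreover have "dual_obj Rows rhs nu \<le> dual_obj Rows rhs lam"
    using dopt dfeas unfolding dual_optimal_def by blast
  ultimately show "z \<le> dual_obj Rows rhs lam + eps" by simp
qed

lemma lin_rep:
  fixes L :: "('j \<Rightarrow> real) \<Rightarrow> real"
  assumes finV: "finite V"
    and loc: "\<And>u u'. (\<forall>j\<in>V. u j = u' j) \<Longrightarrow> L u = L u'"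
    and ad: "\<And>u u'. L (\<lambda>j. u j + u' j) = L u + L u'"
    and hom: "\<And>c u. L (\<lambda>j. c * u j) = c * L u"
  shows "L u = (\<Sum>j\<in>V. L (\<lambda>j'. if j' = j then 1 else 0) * u j)"
proof -
  have L0: "L (\<lambda>j. 0) = 0" using hom[of 0] by simp
  have sumL: "L (\<lambda>j'. \<Sum>k\<in>A. f k j') = (\<Sum>k\<in>A. L (f k))" if "finite A" for A and f :: "'j \<Rightarrow> 'j \<Rightarrow> real"
    using that
  proof (induction A rule: finite_induct)
    case empty then show ?case using L0 by simp
  next
    case (insert x F)
    have "L (\<lambda>j'. \<Sum>k\<in>insert x F. f k j') = L (\<lambda>j'. f x j' + (\<Sum>k\<in>F. f k j'))"
      using insert.hyps by simp
    also have "\<dots> = L (f x) + L (\<lambda>j'. \<Sum>k\<in>F. f k j')" using ad[of "f x"] by simp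
    finally show ?case using insert by simp
  qed
  have "L u = L (\<lambda>j'. \<Sum>k\<in>V. u k * (if j' = k then 1 else 0))"
  proof (rule loc, intro ballI)
    fix j assume j: "j \<in> V"
    have "(\<Sum>k\<in>V. u k * (if j = k then 1 else 0)) = (\<Sum>k\<in>V. if j = k then u k else 0)"
      by (rule sum.cong) auto
    also have "\<dots> = u j" using j finV by simp
    finally show "u j = (\<Sum>k\<in>V. u k * (if j = k then 1 else 0))" by simp
  qed
  also have "\<dots> = (\<Sum>k\<in>V. L (\<lambda>j'. u k * (if j' = k then 1 else 0)))"
    using sumL[OF finV, of "\<lambda>k j'. u k * (if j' = k then 1 else 0)"] by simp
  also have "\<dots> = (\<Sum>k\<in>V. L (\<lambda>j'. if j' = k then 1 else 0) * u k)"
    using hom by (simp add: mult.commute)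
  finally show ?thesis .
qed

lemma fin_Edges: "finite (Edges n)"
  by (rule finite_subset[of _ "Pow {0..n}"]) (auto simp: Edges_def)
lemma fin_nsub: "finite (nsub n)"
  by (rule finite_subset[of _ "Pow (Vp n)"]) (auto simp: nsub_def Vp_def)
lemma fin_Vp: "finite (Vp n)" by (simp add: Vp_def)
lemma fin_scen: "finite (scen N)" by (simp add: scen_def)

lemma VY_set: "{VY \<xi> v |\<xi> v. \<xi> \<in> scen N \<and> v \<in> Vp n} = (\<lambda>(\<xi>, v). VY \<xi> v) ` (scen N \<times> Vp n)"
  by auto

lemma fin_vars: "finite (lp_vars n N)"
  unfolding lp_vars_def VY_set using fin_Edges fin_Vp fin_scen by auto

lemma rows_alt: "lp_rows cvrp n N =
     RTh ` Vp n \<union> (\<lambda>(\<xi>, S). RCap \<xi> S) ` (scen N \<times> nsub n)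
     \<union> (\<lambda>(\<xi>, v). RYlo \<xi> v) ` (scen N \<times> Vp n) \<union> (\<lambda>(\<xi>, v). RYup \<xi> v) ` (scen N \<times> Vp n)
     \<union> RXlo ` Edges n \<union> RXup ` Edges n \<union> RDeg ` Vp n \<union> RSec ` nsub n
     \<union> (if cvrp then {RDep} \<union> RRci ` nsub n else {})"
  unfolding lp_rows_def by auto

lemma fin_rows: "finite (lp_rows cvrp n N)"
  unfolding rows_alt using fin_Edges fin_Vp fin_scen fin_nsub by auto

lemma vars_mem[simp]:
  "VX e \<in> lp_vars n N \<longleftrightarrow> e \<in> Edges n"
  "VT v \<in> lp_vars n N \<longleftrightarrow> v \<in> Vp n"
  "VY \<xi> v \<in> lp_vars n N \<longleftrightarrow> \<xi> \<in> scen N \<and> v \<in> Vp n"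
  unfolding lp_vars_def by auto

lemma rows_mem[simp]:
  "RTh v \<in> lp_rows cvrp n N \<longleftrightarrow> v \<in> Vp n"
  "RCap \<xi> S \<in> lp_rows cvrp n N \<longleftrightarrow> \<xi> \<in> scen N \<and> S \<in> nsub n"
  "RYlo \<xi> v \<in> lp_rows cvrp n N \<longleftrightarrow> \<xi> \<in> scen N \<and> v \<in> Vp n"
  "RYup \<xi> v \<in> lp_rows cvrp n N \<longleftrightarrow> \<xi> \<in> scen N \<and> v \<in> Vp n"
  "RXlo e \<in> lp_rows cvrp n N \<longleftrightarrow> e \<in> Edges n"
  "RXup e \<in> lp_rows cvrp n N \<longleftrightarrow> e \<in> Edges n"
  "RDeg v \<in> lp_rows cvrp n N \<longleftrightarrow> v \<in> Vp n"
  "RSec S \<in> lp_rows cvrp n N \<longleftrightarrow> S \<in> nsub n"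
  "RDep \<in> lp_rows cvrp n N \<longleftrightarrow> cvrp"
  "RRci S \<in> lp_rows cvrp n N \<longleftrightarrow> cvrp \<and> S \<in> nsub n"
  unfolding lp_rows_def by auto

lemma inE_sub: "inE n S \<subseteq> Edges n" by (auto simp: inE_def)
lemma delta_sub: "delta n S \<subseteq> Edges n" by (auto simp: delta_def)
lemma nsub_sub: "S \<in> nsub n \<Longrightarrow> S \<subseteq> Vp n" by (auto simp: nsub_def)

lemma lhs_loc:
  assumes "i \<in> lp_rows cvrp n N" "\<forall>j\<in>lp_vars n N. u j = u' j"
  shows "lp_lhs n N p w i u = lp_lhs n N p w i u'"
  using assms
  by (cases i) (auto simp: inE_def delta_def dest!: nsub_sub intro!: sum.cong arg_cong2[where f="(-)"] arg_cong2[where f="(*)"])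

lemma lhs_add: "lp_lhs n N p w i (\<lambda>j. u j + u' j) = lp_lhs n N p w i u + lp_lhs n N p w i u'"
  by (cases i) (simp_all add: sum.distrib algebra_simps)

lemma lhs_hom: "lp_lhs n N p w i (\<lambda>j. c * u j) = c * lp_lhs n N p w i u"
  by (cases i) (simp_all add: sum_distrib_left algebra_simps)

lemma hlin:
  assumes "i \<in> lp_rows cvrp n N"
  shows "lp_lhs n N p w i u = (\<Sum>j\<in>lp_vars n N. lp_coef (lp_lhs n N p w) i j * u j)"
  unfolding lp_coef_def
  by (rule lin_rep[OF fin_vars]) (auto intro: lhs_loc[OF assms] simp: lhs_add lhs_hom)

lemma obj_split:
  "lp_obj (lp_vars n N) (lp_cost c) u = (\<Sum>e\<in>Edges n. c e * u (VX e)) + (\<Sum>v\<in>Vp n. u (VT v))"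
proof -
  let ?A = "VX ` Edges n" and ?B = "VT ` Vp n" and ?C = "(\<lambda>(\<xi>, v). VY \<xi> v) ` (scen N \<times> Vp n)"
  have V: "lp_vars n N = ?A \<union> ?B \<union> ?C" unfolding lp_vars_def VY_set ..
  have fA: "finite ?A" "finite ?B" "finite ?C" using fin_Edges fin_Vp fin_scen by auto
  have "lp_obj (lp_vars n N) (lp_cost c) u = (\<Sum>j\<in>?A \<union> ?B \<union> ?C. lp_cost c j * u j)"
    unfolding lp_obj_def V ..
  also have "\<dots> = (\<Sum>j\<in>?A. lp_cost c j * u j) + (\<Sum>j\<in>?B. lp_cost c j * u j) + (\<Sum>j\<in>?C. lp_cost c j * u j)"
    using fA by (subst sum.union_disjoint, auto)+
  also have "(\<Sum>j\<in>?C. lp_cost c j * u j) = 0" by (rule sum.neutral) auto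
  also have "(\<Sum>j\<in>?A. lp_cost c j * u j) = (\<Sum>e\<in>Edges n. c e * u (VX e))"
    by (subst sum.reindex) (auto simp: inj_on_def)
  also have "(\<Sum>j\<in>?B. lp_cost c j * u j) = (\<Sum>v\<in>Vp n. u (VT v))"
    by (subst sum.reindex) (auto simp: inj_on_def)
  finally show ?thesis by simp
qed

lemma swap_nsub:
  fixes a :: "nat set \<Rightarrow> real" and y :: "nat \<Rightarrow> real"
  shows
  "(\<Sum>S\<in>nsub n. a S * (\<Sum>v\<in>S. y v)) = (\<Sum>v\<in>Vp n. (\<Sum>S\<in>{S\<in>nsub n. v \<in> S}. a S) * y v)"
proof -
  have "(\<Sum>S\<in>nsub n. a S * (\<Sum>v\<in>S. y v)) = (\<Sum>S\<in>nsub n. \<Sum>v\<in>Vp n. if v \<in> S then a S * y v else 0)"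
  proof (rule sum.cong)
    fix S assume S: "S \<in> nsub n"
    have "(\<Sum>v\<in>Vp n. if v \<in> S then a S * y v else 0) = (\<Sum>v\<in>Vp n \<inter> S. a S * y v)"
      using fin_Vp by (simp add: sum.inter_restrict)
    also have "Vp n \<inter> S = S" using nsub_sub[OF S] by auto
    moreover have "a S * (\<Sum>v\<in>S. y v) = (\<Sum>v\<in>S. a S * y v)" by (rule sum_distrib_left)
    ultimately show "a S * (\<Sum>v\<in>S. y v) = (\<Sum>v\<in>Vp n. if v \<in> S then a S * y v else 0)"
      by simp
  qed simp
  also have "\<dots> = (\<Sum>v\<in>Vp n. \<Sum>S\<in>nsub n. if v \<in> S then a S * y v else 0)"
    by (rule sum.swap)
  also have "\<dots> = (\<Sum>v\<in>Vp n. (\<Sum>S\<in>{S\<in>nsub n. v \<in> S}. a S) * y v)"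
  proof (rule sum.cong)
    fix v
    show "(\<Sum>S\<in>nsub n. if v \<in> S then a S * y v else 0) = (\<Sum>S\<in>{S\<in>nsub n. v \<in> S}. a S) * y v"
      using fin_nsub by (simp add: sum.inter_filter[symmetric] sum_distrib_right)
  qed simp
  finally show ?thesis .
qed

lemma agg_identity:
  "(\<Sum>\<xi>\<in>scen N. \<Sum>S\<in>nsub n. \<alpha> \<xi> S * (lp_lhs n N p w (RCap \<xi> S) u - lp_rhs N C p d b k (RCap \<xi> S)))
   + (\<Sum>\<xi>\<in>scen N. \<Sum>v\<in>Vp n. \<beta> \<xi> v * (u (VY \<xi> v) - real (b v)))
   = (\<Sum>\<xi>\<in>scen N. \<Sum>v\<in>Vp n. (\<beta> \<xi> v + (\<Sum>S\<in>{S\<in>nsub n. v \<in> S}. \<alpha> \<xi> S)) * u (VY \<xi> v))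
     - ((\<Sum>\<xi>\<in>scen N. \<Sum>S\<in>nsub n. \<alpha> \<xi> S * (\<Sum>e\<in>inE n S. u (VX e))) + nu n N C d b \<alpha> \<beta>)"
proof -
  have "(\<Sum>S\<in>nsub n. \<alpha> \<xi> S * (lp_lhs n N p w (RCap \<xi> S) u - lp_rhs N C p d b k (RCap \<xi> S)))
     = (\<Sum>S\<in>nsub n. \<alpha> \<xi> S * (\<Sum>v\<in>S. u (VY \<xi> v))) - (\<Sum>S\<in>nsub n. \<alpha> \<xi> S * (\<Sum>e\<in>inE n S. u (VX e)))
       - (\<Sum>S\<in>nsub n. \<alpha> \<xi> S * (of_int (kxi C d \<xi> S) - real (card S)))" for \<xi>
    by (simp only: lp_lhs.simps lp_rhs.simps right_diff_distrib sum_subtractf)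
  moreover have "(\<Sum>v\<in>Vp n. \<beta> \<xi> v * (u (VY \<xi> v) - real (b v)))
     = (\<Sum>v\<in>Vp n. \<beta> \<xi> v * u (VY \<xi> v)) - (\<Sum>v\<in>Vp n. \<beta> \<xi> v * real (b v))" for \<xi>
    by (simp add: algebra_simps sum_subtractf)
  moreover have "(\<Sum>v\<in>Vp n. (\<beta> \<xi> v + (\<Sum>S\<in>{S\<in>nsub n. v \<in> S}. \<alpha> \<xi> S)) * u (VY \<xi> v))
     = (\<Sum>v\<in>Vp n. \<beta> \<xi> v * u (VY \<xi> v)) + (\<Sum>S\<in>nsub n. \<alpha> \<xi> S * (\<Sum>v\<in>S. u (VY \<xi> v)))" for \<xi>
    by (simp add: swap_nsub distrib_right sum.distrib)
  ultimately show ?thesis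
    unfolding nu_def by (simp add: sum.distrib sum_subtractf algebra_simps)
qed

lemma rows_sum_split:
  fixes f :: "row \<Rightarrow> real" and n N :: nat and cvrp :: bool
  defines "K \<equiv> (\<lambda>(\<xi>, S). RCap \<xi> S) ` (scen N \<times> nsub n) \<union> (\<lambda>(\<xi>, v). RYup \<xi> v) ` (scen N \<times> Vp n)"
  shows "(\<Sum>i\<in>lp_rows cvrp n N. f i) = (\<Sum>i\<in>lp_rows cvrp n N - K. f i)
          + (\<Sum>\<xi>\<in>scen N. \<Sum>S\<in>nsub n. f (RCap \<xi> S)) + (\<Sum>\<xi>\<in>scen N. \<Sum>v\<in>Vp n. f (RYup \<xi> v))"
proof -
  have KR: "K \<subseteq> lp_rows cvrp n N" unfolding K_def by auto
  have finK: "finite ((\<lambda>(\<xi>, S). RCap \<xi> S) ` (scen N \<times> nsub n))" "finite ((\<lambda>(\<xi>, v). RYup \<xi> v) ` (scen N \<times> Vp n))"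
    using fin_scen fin_nsub fin_Vp by auto
  have "(\<Sum>i\<in>lp_rows cvrp n N. f i) = (\<Sum>i\<in>lp_rows cvrp n N - K. f i) + (\<Sum>i\<in>K. f i)"
    using sum.subset_diff[OF KR fin_rows] .
  also have "(\<Sum>i\<in>K. f i) = (\<Sum>i\<in>(\<lambda>(\<xi>, S). RCap \<xi> S) ` (scen N \<times> nsub n). f i)
       + (\<Sum>i\<in>(\<lambda>(\<xi>, v). RYup \<xi> v) ` (scen N \<times> Vp n). f i)"
    unfolding K_def using finK by (subst sum.union_disjoint) auto
  also have "(\<Sum>i\<in>(\<lambda>(\<xi>, S). RCap \<xi> S) ` (scen N \<times> nsub n). f i) = (\<Sum>\<xi>\<in>scen N. \<Sum>S\<in>nsub n. f (RCap \<xi> S))"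
    by (subst sum.reindex) (auto simp: inj_on_def sum.cartesian_product prod.case_distrib)
  also have "(\<Sum>i\<in>(\<lambda>(\<xi>, v). RYup \<xi> v) ` (scen N \<times> Vp n). f i) = (\<Sum>\<xi>\<in>scen N. \<Sum>v\<in>Vp n. f (RYup \<xi> v))"
    by (subst sum.reindex) (auto simp: inj_on_def sum.cartesian_product prod.case_distrib)
  finally show ?thesis by simp
qed

lemma rows_sat:
  assumes X: "Xset cvrp n N C p d k (\<lambda>e. u (VX e))"
    and y0: "\<forall>\<xi>\<in>scen N. \<forall>v\<in>Vp n. 0 \<le> u (VY \<xi> v)"
    and th: "\<forall>v\<in>Vp n. u (VT v) \<ge> (\<Sum>\<xi>\<in>scen N. p \<xi> * w v * u (VY \<xi> v))"
    and i: "i \<in> lp_rows cvrp n N - ((\<lambda>(\<xi>, S). RCap \<xi> S) ` (scen N \<times> nsub n) \<union> (\<lambda>(\<xi>, v). RYup \<xi> v) ` (scen N \<times> Vp n))"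
  shows "sat (lp_sense i) (lp_lhs n N p w i u) (lp_rhs N C p d b k i)"
  using assms by (cases i) (auto simp: Xset_def X_cvrp_def X_sub_def split: if_splits)

theorem corollary4:
  fixes n N k :: nat and cvrp :: bool and C :: real
    and c :: "nat set \<Rightarrow> real" and d :: "nat \<Rightarrow> nat \<Rightarrow> real" and p w :: "nat \<Rightarrow> real"
    and b :: "nat \<Rightarrow> nat" and z :: real
    and \<alpha> :: "nat \<Rightarrow> nat set \<Rightarrow> real" and \<beta> :: "nat \<Rightarrow> nat \<Rightarrow> real"
  assumes C_pos: "C > 0"
    and c_nonneg: "\<forall>e\<in>Edges n. c e \<ge> 0"
    and d_nonneg: "\<forall>\<xi>\<in>scen N. \<forall>v\<in>Vp n. 0 \<le> d \<xi> v \<and> d \<xi> v \<le> C"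
    and p_prob: "\<forall>\<xi>\<in>scen N. p \<xi> \<ge> 0" "(\<Sum>\<xi>\<in>scen N. p \<xi>) = 1"
    and w_nonneg: "\<forall>v\<in>Vp n. w v \<ge> 0"
    and opt: "lp_opt_value (lp_vars n N) (lp_rows cvrp n N) (lp_lhs n N p w) lp_sense
                (lp_rhs N C p d b k) (lp_cost c) z"
    and dual: "\<exists>lam. dual_optimal (lp_vars n N) (lp_rows cvrp n N) (lp_lhs n N p w) lp_sense
                        (lp_rhs N C p d b k) (lp_cost c) lam
                   \<and> (\<forall>\<xi>\<in>scen N. \<forall>S\<in>nsub n. \<alpha> \<xi> S = lam (RCap \<xi> S))
                   \<and> (\<forall>\<xi>\<in>scen N. \<forall>v\<in>Vp n. \<beta> \<xi> v = lam (RYup \<xi> v))"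
  shows "is_min {(\<Sum>e\<in>Edges n. c e * x e) + (\<Sum>v\<in>Vp n. \<theta> v) | x \<theta>.
                   Xset cvrp n N C p d k x \<and> (\<exists>y. (\<theta>, y) \<in> Gamma n N C p d w b \<alpha> \<beta> x)} z"
proof -
  let ?V = "lp_vars n N" and ?R = "lp_rows cvrp n N" and ?lhs = "lp_lhs n N p w"
    and ?rhs = "lp_rhs N C p d b k" and ?cost = "lp_cost c"
  let ?K = "(\<lambda>(\<xi>, S). RCap \<xi> S) ` (scen N \<times> nsub n) \<union> (\<lambda>(\<xi>, v). RYup \<xi> v) ` (scen N \<times> Vp n)"
  let ?Agg = "\<lambda>u. (\<Sum>\<xi>\<in>scen N. \<Sum>S\<in>nsub n. \<alpha> \<xi> S * (?lhs (RCap \<xi> S) u - ?rhs (RCap \<xi> S)))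
   + (\<Sum>\<xi>\<in>scen N. \<Sum>v\<in>Vp n. \<beta> \<xi> v * (u (VY \<xi> v) - real (b v)))"
  obtain lam where dopt: "dual_optimal ?V ?R ?lhs lp_sense ?rhs ?cost lam"
    and al: "\<forall>\<xi>\<in>scen N. \<forall>S\<in>nsub n. \<alpha> \<xi> S = lam (RCap \<xi> S)"
    and be: "\<forall>\<xi>\<in>scen N. \<forall>v\<in>Vp n. \<beta> \<xi> v = lam (RYup \<xi> v)"
    using dual by blast
  have zle: "z \<le> dual_obj ?R ?rhs lam"
    by (rule strong_duality_ge[OF fin_vars fin_rows hlin opt dopt])
  have dfeas: "dual_feasible ?V ?R ?lhs lp_sense ?cost lam"
    using dopt unfolding dual_optimal_def by blast
  have lamsign: "\<forall>i\<in>?R. (lp_sense i = Ge \<longrightarrow> lam i \<ge> 0) \<and> (lp_sense i = Le \<longrightarrow> lam i \<le> 0)"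
    using dfeas unfolding dual_feasible_def by blast
  have key: "lp_obj ?V ?cost u = (\<Sum>i\<in>?R. lam i * ?lhs i u)" for u
  proof -
    have "lp_obj ?V ?cost u = (\<Sum>j\<in>?V. (\<Sum>i\<in>?R. lam i * lp_coef ?lhs i j) * u j)"
      unfolding lp_obj_def using dfeas unfolding dual_feasible_def by (intro sum.cong) auto
    also have "\<dots> = (\<Sum>i\<in>?R. \<Sum>j\<in>?V. lam i * (lp_coef ?lhs i j * u j))"
      by (subst sum.swap) (simp add: sum_distrib_right mult.assoc)
    also have "\<dots> = (\<Sum>i\<in>?R. lam i * ?lhs i u)"
      by (intro sum.cong refl) (simp add: hlin[symmetric] sum_distrib_left[symmetric])
    finally show ?thesis .
  qed
  have decomp: "lp_obj ?V ?cost u = dual_obj ?R ?rhs lam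
      + (\<Sum>i\<in>?R - ?K. lam i * (?lhs i u - ?rhs i)) + ?Agg u" for u
  proof -
    have "lp_obj ?V ?cost u = dual_obj ?R ?rhs lam + (\<Sum>i\<in>?R. lam i * (?lhs i u - ?rhs i))"
      unfolding key dual_obj_def by (simp add: algebra_simps sum_subtractf)
    also have "(\<Sum>i\<in>?R. lam i * (?lhs i u - ?rhs i)) = (\<Sum>i\<in>?R - ?K. lam i * (?lhs i u - ?rhs i))
       + (\<Sum>\<xi>\<in>scen N. \<Sum>S\<in>nsub n. lam (RCap \<xi> S) * (?lhs (RCap \<xi> S) u - ?rhs (RCap \<xi> S)))
       + (\<Sum>\<xi>\<in>scen N. \<Sum>v\<in>Vp n. lam (RYup \<xi> v) * (?lhs (RYup \<xi> v) u - ?rhs (RYup \<xi> v)))"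
      by (rule rows_sum_split)
    also have "(\<Sum>\<xi>\<in>scen N. \<Sum>S\<in>nsub n. lam (RCap \<xi> S) * (?lhs (RCap \<xi> S) u - ?rhs (RCap \<xi> S)))
       = (\<Sum>\<xi>\<in>scen N. \<Sum>S\<in>nsub n. \<alpha> \<xi> S * (?lhs (RCap \<xi> S) u - ?rhs (RCap \<xi> S)))"
      using al by (intro sum.cong refl) auto
    also have "(\<Sum>\<xi>\<in>scen N. \<Sum>v\<in>Vp n. lam (RYup \<xi> v) * (?lhs (RYup \<xi> v) u - ?rhs (RYup \<xi> v)))
       = (\<Sum>\<xi>\<in>scen N. \<Sum>v\<in>Vp n. \<beta> \<xi> v * (u (VY \<xi> v) - real (b v)))"
      using be by (intro sum.cong refl) auto
    finally show ?thesis by simp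
  qed
  show ?thesis
    unfolding is_min_def
  proof (intro conjI ballI)
    obtain u where ufeas: "lp_feasible ?R ?lhs lp_sense ?rhs u" and zu: "z = lp_obj ?V ?cost u"
      using opt unfolding lp_opt_value_def is_min_def by blast
    have feas: "\<And>i. i \<in> ?R \<Longrightarrow> sat (lp_sense i) (?lhs i u) (?rhs i)"
      using ufeas unfolding lp_feasible_def by blast
    define x where "x = (\<lambda>e. u (VX e))"
    define \<theta> where "\<theta> = (\<lambda>v. u (VT v))"
    define y where "y = (\<lambda>\<xi> v. u (VY \<xi> v))"
    have "Xset cvrp n N C p d k x"
      unfolding Xset_def X_cvrp_def X_sub_def x_def
      using feas[of "RXlo _"] feas[of "RXup _"] feas[of "RDeg _"] feas[of "RSec _"]
        feas[of RDep] feas[of "RRci _"]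
      by auto
    moreover have "(\<theta>, y) \<in> Gamma n N C p d w b \<alpha> \<beta> x"
    proof -
      have y0: "\<forall>\<xi>\<in>scen N. \<forall>v\<in>Vp n. 0 \<le> y \<xi> v \<and> y \<xi> v \<le> real (b v)"
        unfolding y_def using feas[of "RYlo _ _"] feas[of "RYup _ _"] by auto
      have th: "\<forall>v\<in>Vp n. \<theta> v \<ge> (\<Sum>\<xi>\<in>scen N. p \<xi> * w v * y \<xi> v)"
        unfolding y_def \<theta>_def using feas[of "RTh _"] by auto
      have th0: "\<forall>v\<in>Vp n. 0 \<le> \<theta> v"
      proof
        fix v assume v: "v \<in> Vp n"
        have "0 \<le> (\<Sum>\<xi>\<in>scen N. p \<xi> * w v * y \<xi> v)"
          using p_prob(1) w_nonneg y0 v by (intro sum_nonneg) auto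
        then show "0 \<le> \<theta> v" using th v by force
      qed
      have "0 \<le> ?Agg u"
      proof (intro add_nonneg_nonneg sum_nonneg)
        fix \<xi> S assume "\<xi> \<in> scen N" "S \<in> nsub n"
        then show "0 \<le> \<alpha> \<xi> S * (?lhs (RCap \<xi> S) u - ?rhs (RCap \<xi> S))"
          using al lamsign feas[of "RCap \<xi> S"] by auto
      next
        fix \<xi> v assume "\<xi> \<in> scen N" "v \<in> Vp n"
        then show "0 \<le> \<beta> \<xi> v * (u (VY \<xi> v) - real (b v))"
          using be lamsign[rule_format, of "RYup \<xi> v"] feas[of "RYup \<xi> v"]
          by (auto intro!: mult_nonpos_nonpos)
      qed
      then show ?thesis
        unfolding agg_identity Gamma_def using y0 th th0 unfolding x_def y_def by auto
    qed
    moreover have "z = (\<Sum>e\<in>Edges n. c e * x e) + (\<Sum>v\<in>Vp n. \<theta> v)"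
      unfolding zu obj_split x_def \<theta>_def ..
    ultimately show "z \<in> {(\<Sum>e\<in>Edges n. c e * x e) + (\<Sum>v\<in>Vp n. \<theta> v) | x \<theta>.
                   Xset cvrp n N C p d k x \<and> (\<exists>y. (\<theta>, y) \<in> Gamma n N C p d w b \<alpha> \<beta> x)}"
      by blast
  next
    fix a assume "a \<in> {(\<Sum>e\<in>Edges n. c e * x e) + (\<Sum>v\<in>Vp n. \<theta> v) | x \<theta>.
                   Xset cvrp n N C p d k x \<and> (\<exists>y. (\<theta>, y) \<in> Gamma n N C p d w b \<alpha> \<beta> x)}"
    then obtain x \<theta> y where a: "a = (\<Sum>e\<in>Edges n. c e * x e) + (\<Sum>v\<in>Vp n. \<theta> v)"
      and X: "Xset cvrp n N C p d k x" and G: "(\<theta>, y) \<in> Gamma n N C p d w b \<alpha> \<beta> x" by blast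
    define u where "u = (\<lambda>j. case j of VX e \<Rightarrow> x e | VT v \<Rightarrow> \<theta> v | VY \<xi> v \<Rightarrow> y \<xi> v)"
    have ux: "(\<lambda>e. u (VX e)) = x" unfolding u_def by simp
    have G': "(\<forall>\<xi>\<in>scen N. \<forall>v\<in>Vp n. 0 \<le> u (VY \<xi> v) \<and> u (VY \<xi> v) \<le> real (b v))"
      "\<forall>v\<in>Vp n. u (VT v) \<ge> (\<Sum>\<xi>\<in>scen N. p \<xi> * w v * u (VY \<xi> v))"
      "(\<Sum>\<xi>\<in>scen N. \<Sum>v\<in>Vp n. (\<beta> \<xi> v + (\<Sum>S\<in>{S\<in>nsub n. v \<in> S}. \<alpha> \<xi> S)) * u (VY \<xi> v))
        \<ge> (\<Sum>\<xi>\<in>scen N. \<Sum>S\<in>nsub n. \<alpha> \<xi> S * (\<Sum>e\<in>inE n S. u (VX e))) + nu n N C d b \<alpha> \<beta>"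
      using G unfolding Gamma_def u_def by auto
    have agg: "0 \<le> ?Agg u" unfolding agg_identity using G'(3) by simp
    have rest: "0 \<le> (\<Sum>i\<in>?R - ?K. lam i * (?lhs i u - ?rhs i))"
    proof (rule sum_nonneg)
      fix i assume i: "i \<in> ?R - ?K"
      have "sat (lp_sense i) (?lhs i u) (?rhs i)"
        by (rule rows_sat[OF _ _ _ i]) (use X ux G' in auto)
      then have "lam i * ?rhs i \<le> lam i * ?lhs i u"
        using sat_mult lamsign i by blast
      then show "0 \<le> lam i * (?lhs i u - ?rhs i)" by (simp add: algebra_simps)
    qed
    have "a = lp_obj ?V ?cost u" unfolding a obj_split u_def by simp
    then show "z \<le> a" using decomp[of u] zle agg rest by linarith
  qed
qed
end
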